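(* Let $\Gamma$ be a distance-regular graph with diameter $D\ge3$ which is neither bipartite nor almost bipartite. Let $\sigma_0,\dots,\sigma_D$ and $\rho_0,\dots,\rho_D$ be nontrivial pseudo cosine sequences forming a tight pair, and assume $\varepsilon=1$ is an auxiliary parameter for this pair. Then: (i) $\rho_i=(-1)^i$ for $0\le i\le D-1$ and $\rho_D\ne(-1)^D$; (ii) $\sigma_{D-1}=\sigma_D$; (iii) $a_i=0$ for $0\le i\le D-2$ and $a_{D-1}\ne0$.
   Context: $\Gamma$ is a finite connected undirected graph without loops or multiple edges, distance-regular with diameter $D$, intersection numbers $a_i,b_i,c_i$ ($c_0=0$, $b_D=0$), valency $k$, $c_i+a_i+b_i=k$. Bipartite: $a_i=0$ for all $0\le i\le D$; almost bipartite: $a_D\ne0$, $a_i=0$ for $0\le i\le D-1$. For $\theta\in\mathbb{R}$ the pseudo cosine sequence for $\theta$ is the sequence of reals $\sigma_0,\dots,\sigma_D$ with $\sigma_0=1$ and $c_i\sigma_{i-1}+a_i\sigma_i+b_i\sigma_{i+1}=\theta\sigma_i$ for $0\le i\le D-1$; nontrivial means $\sigma_1\ne1$. Pseudo cosine sequences $\sigma_i$, $\rho_i$ form a tight pair if $(\sigma_i\rho_i)_{i=0}^D$ is a pseudo cosine sequence. For a tight pair of nontrivial pseudo cosine sequences, an auxiliary parameter is a real $\varepsilon$ with $\sigma_i\rho_i-\sigma_{i-1}\rho_{i-1}=\varepsilon(\sigma_{i-1}\rho_i-\sigma_i\rho_{i-1})$ for $1\le i\le D$. *)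

theory Defs
  imports Complex_Main
begin

definition is_path :: "'v set \<Rightarrow> ('v \<Rightarrow> 'v \<Rightarrow> bool) \<Rightarrow> 'v \<Rightarrow> 'v \<Rightarrow> nat \<Rightarrow> bool" where
  "is_path V E x y n \<longleftrightarrow> (\<exists>p. length p = Suc n \<and> hd p = x \<and> last p = y \<and> set p \<subseteq> V
      \<and> (\<forall>i<n. E (p ! i) (p ! Suc i)))"

definition gdist :: "'v set \<Rightarrow> ('v \<Rightarrow> 'v \<Rightarrow> bool) \<Rightarrow> 'v \<Rightarrow> 'v \<Rightarrow> nat" where
  "gdist V E x y = (LEAST n. is_path V E x y n)"

definition simple_graph :: "'v set \<Rightarrow> ('v \<Rightarrow> 'v \<Rightarrow> bool) \<Rightarrow> bool" where
  "simple_graph V E \<longleftrightarrow> finite V \<and> V \<noteq> {}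
     \<and> (\<forall>x y. E x y \<longrightarrow> x \<in> V \<and> y \<in> V)
     \<and> (\<forall>x y. E x y \<longrightarrow> E y x) \<and> (\<forall>x. \<not> E x x)"

definition connected_graph :: "'v set \<Rightarrow> ('v \<Rightarrow> 'v \<Rightarrow> bool) \<Rightarrow> bool" where
  "connected_graph V E \<longleftrightarrow> (\<forall>x\<in>V. \<forall>y\<in>V. \<exists>n. is_path V E x y n)"

text \<open>Diameter D and intersection numbers a, b, c: for all vertices x, y at distance i
  (0 \<le> i \<le> D), y has exactly c i neighbours at distance i-1 from x (for i \<ge> 1),
  a i neighbours at distance i and b i neighbours at distance i+1; c 0 = 0.
  (b D = 0 then holds automatically.)\<close>
definition distance_regular ::
  "'v set \<Rightarrow> ('v \<Rightarrow> 'v \<Rightarrow> bool) \<Rightarrow> nat \<Rightarrow> (nat \<Rightarrow> nat) \<Rightarrow> (nat \<Rightarrow> nat) \<Rightarrow> (nat \<Rightarrow> nat) \<Rightarrow> bool" where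
  "distance_regular V E D a b c \<longleftrightarrow>
     simple_graph V E \<and> connected_graph V E
     \<and> D = Max {gdist V E x y | x y. x \<in> V \<and> y \<in> V}
     \<and> c 0 = 0
     \<and> (\<forall>i\<le>D. \<forall>x\<in>V. \<forall>y\<in>V. gdist V E x y = i \<longrightarrow>
          (1 \<le> i \<longrightarrow> card {z\<in>V. E y z \<and> gdist V E x z = i - 1} = c i)
        \<and> card {z\<in>V. E y z \<and> gdist V E x z = i} = a i
        \<and> card {z\<in>V. E y z \<and> gdist V E x z = i + 1} = b i)"

definition bipartite_drg :: "nat \<Rightarrow> (nat \<Rightarrow> nat) \<Rightarrow> bool" where
  "bipartite_drg D a \<longleftrightarrow> (\<forall>i\<le>D. a i = 0)"

definition almost_bipartite_drg :: "nat \<Rightarrow> (nat \<Rightarrow> nat) \<Rightarrow> bool" where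
  "almost_bipartite_drg D a \<longleftrightarrow> a D \<noteq> 0 \<and> (\<forall>i<D. a i = 0)"

text \<open>Pseudo cosine sequence for \<theta>; only the values \<sigma> 0 .. \<sigma> D are relevant.
  At i = 0 the term c 0 * \<sigma>(0-1) vanishes since c 0 = 0.\<close>
definition pseudo_cosine ::
  "nat \<Rightarrow> (nat \<Rightarrow> nat) \<Rightarrow> (nat \<Rightarrow> nat) \<Rightarrow> (nat \<Rightarrow> nat) \<Rightarrow> real \<Rightarrow> (nat \<Rightarrow> real) \<Rightarrow> bool" where
  "pseudo_cosine D a b c \<theta> \<sigma> \<longleftrightarrow> \<sigma> 0 = 1 \<and>
     (\<forall>i<D. real (c i) * \<sigma> (i - 1) + real (a i) * \<sigma> i + real (b i) * \<sigma> (Suc i) = \<theta> * \<sigma> i)"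

definition is_pseudo_cosine ::
  "nat \<Rightarrow> (nat \<Rightarrow> nat) \<Rightarrow> (nat \<Rightarrow> nat) \<Rightarrow> (nat \<Rightarrow> nat) \<Rightarrow> (nat \<Rightarrow> real) \<Rightarrow> bool" where
  "is_pseudo_cosine D a b c \<sigma> \<longleftrightarrow> (\<exists>\<theta>. pseudo_cosine D a b c \<theta> \<sigma>)"

definition nontrivial_pc :: "(nat \<Rightarrow> real) \<Rightarrow> bool" where
  "nontrivial_pc \<sigma> \<longleftrightarrow> \<sigma> 1 \<noteq> 1"

definition tight_pair ::
  "nat \<Rightarrow> (nat \<Rightarrow> nat) \<Rightarrow> (nat \<Rightarrow> nat) \<Rightarrow> (nat \<Rightarrow> nat) \<Rightarrow> (nat \<Rightarrow> real) \<Rightarrow> (nat \<Rightarrow> real) \<Rightarrow> bool" where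
  "tight_pair D a b c \<sigma> \<rho> \<longleftrightarrow> is_pseudo_cosine D a b c \<sigma> \<and> is_pseudo_cosine D a b c \<rho>
     \<and> is_pseudo_cosine D a b c (\<lambda>i. \<sigma> i * \<rho> i)"

definition auxiliary_parameter :: "nat \<Rightarrow> (nat \<Rightarrow> real) \<Rightarrow> (nat \<Rightarrow> real) \<Rightarrow> real \<Rightarrow> bool" where
  "auxiliary_parameter D \<sigma> \<rho> \<epsilon> \<longleftrightarrow>
     (\<forall>i. 1 \<le> i \<and> i \<le> D \<longrightarrow>
        \<sigma> i * \<rho> i - \<sigma> (i - 1) * \<rho> (i - 1) = \<epsilon> * (\<sigma> (i - 1) * \<rho> i - \<sigma> i * \<rho> (i - 1)))"

end

theory Submission
  imports Defs
begin

lemma path_snoc: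
  assumes "is_path V E x y n" "E y z" "z \<in> V"
  shows "is_path V E x z (Suc n)"
proof -
  obtain p where p: "length p = Suc n" "hd p = x" "last p = y" "set p \<subseteq> V" "\<forall>i<n. E (p ! i) (p ! Suc i)"
    using assms(1) unfolding is_path_def by blast
  have pn: "p ! n = y" using p(1,3) by (metis diff_Suc_1 last_conv_nth list.size(3) nat.simps(3))
  have "\<forall>i<Suc n. E ((p @ [z]) ! i) ((p @ [z]) ! Suc i)"
  proof (intro allI impI)
    fix i assume i: "i < Suc n"
    show "E ((p @ [z]) ! i) ((p @ [z]) ! Suc i)"
    proof (cases "i < n")
      case True then show ?thesis using p(1,5) by (simp add: nth_append)
    next
      case False then have "i = n" using i by simp
      then show ?thesis using p(1) pn assms(2) by (simp add: nth_append)
    qed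
  qed
  moreover have "hd (p @ [z]) = x" using p(1,2) by (cases p) auto
  ultimately show ?thesis unfolding is_path_def using p assms(3)
    by (intro exI[of _ "p @ [z]"]) auto
qed

lemma path_refl: "x \<in> V \<Longrightarrow> is_path V E x x 0"
  unfolding is_path_def by (intro exI[of _ "[x]"]) auto

lemma path0: "is_path V E x y 0 \<Longrightarrow> x = y"
  unfolding is_path_def by (auto simp: length_Suc_conv)

lemma gdist_path: "connected_graph V E \<Longrightarrow> x \<in> V \<Longrightarrow> y \<in> V \<Longrightarrow> is_path V E x y (gdist V E x y)"
  unfolding gdist_def connected_graph_def by (meson LeastI_ex)

lemma gdist_le: "is_path V E x y n \<Longrightarrow> gdist V E x y \<le> n"
  unfolding gdist_def by (rule Least_le)

lemma gdist0: "connected_graph V E \<Longrightarrow> x \<in> V \<Longrightarrow> y \<in> V \<Longrightarrow> gdist V E x y = 0 \<longleftrightarrow> x = y"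
  using gdist_path path0 gdist_le path_refl by (metis le_zero_eq)

lemma gdist_tri:
  assumes "simple_graph V E" "connected_graph V E" "x \<in> V" "E y z"
  shows "gdist V E x z \<le> Suc (gdist V E x y)"
proof -
  have "y \<in> V" "z \<in> V" using assms unfolding simple_graph_def by auto
  then have "is_path V E x z (Suc (gdist V E x y))"
    using path_snoc gdist_path assms by metis
  then show ?thesis by (rule gdist_le)
qed

lemma gdist_pred:
  assumes "simple_graph V E" "connected_graph V E" "x \<in> V" "y \<in> V" "gdist V E x y = Suc n"
  shows "\<exists>z\<in>V. E z y \<and> gdist V E x z = n"
proof -
  obtain p where p: "length p = Suc (Suc n)" "hd p = x" "last p = y" "set p \<subseteq> V"
    "\<forall>i<Suc n. E (p ! i) (p ! Suc i)"
    using gdist_path[OF assms(2,3,4)] assms(5) unfolding is_path_def by auto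
  define z where "z = p ! n"
  have zV: "z \<in> V" using p(1,4) z_def by (metis in_mono less_SucI lessI nth_mem)
  have py: "p ! Suc n = y" using p(1,3) by (metis diff_Suc_1 last_conv_nth list.size(3) nat.simps(3))
  have Ezy: "E z y" using p(5) py z_def by auto
  have "is_path V E x z n" unfolding is_path_def
  proof (intro exI[of _ "take (Suc n) p"] conjI)
    show "length (take (Suc n) p) = Suc n" using p(1) by simp
    show "hd (take (Suc n) p) = x" using p(1,2) by (cases p) auto
    show "last (take (Suc n) p) = z" proof -
      have "take (Suc n) p \<noteq> []" using p(1) by (cases p) auto
      then have "last (take (Suc n) p) = take (Suc n) p ! n" using p(1) by (simp add: last_conv_nth)
      then show ?thesis using p(1) z_def by simp
    qed
    show "set (take (Suc n) p) \<subseteq> V" using p(4) by (meson order_trans set_take_subset)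
    show "\<forall>i<n. E (take (Suc n) p ! i) (take (Suc n) p ! Suc i)" using p(5) by simp
  qed
  then have le: "gdist V E x z \<le> n" by (rule gdist_le)
  have "gdist V E x y \<le> Suc (gdist V E x z)" using gdist_tri[OF assms(1,2,3) Ezy] .
  then have "gdist V E x z = n" using le assms(5) by simp
  then show ?thesis using zV Ezy by blast
qed

lemma dist_exists:
  assumes "simple_graph V E" "connected_graph V E" "x \<in> V"
  shows "y \<in> V \<Longrightarrow> gdist V E x y = n \<Longrightarrow> j \<le> n \<Longrightarrow> \<exists>z\<in>V. gdist V E x z = j"
proof (induction n arbitrary: y)
  case 0 then show ?case by auto
next
  case (Suc n)
  show ?case
  proof (cases "j = Suc n")
    case True then show ?thesis using Suc by blast
  next
    case False
    obtain z where "z \<in> V" "gdist V E x z = n" using gdist_pred[OF assms Suc.prems(1,2)] by blast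
    then show ?thesis using Suc.IH False Suc.prems(3) by simp
  qed
qed

lemma graph_facts:
  assumes dr: "distance_regular V E D a b c"
  shows "a 0 = 0" "\<And>i. i \<le> D \<Longrightarrow> c i + a i + b i = b 0"
    "\<And>i. 1 \<le> i \<Longrightarrow> i \<le> D \<Longrightarrow> c i > 0" "\<And>i. i < D \<Longrightarrow> b i > 0"
proof -
  have sg: "simple_graph V E" and cg: "connected_graph V E"
    and Dm: "D = Max {gdist V E x y | x y. x \<in> V \<and> y \<in> V}"
    and c0: "c 0 = 0"
    and reg: "\<And>i x y. i \<le> D \<Longrightarrow> x \<in> V \<Longrightarrow> y \<in> V \<Longrightarrow> gdist V E x y = i \<Longrightarrow>
          (1 \<le> i \<longrightarrow> card {z\<in>V. E y z \<and> gdist V E x z = i - 1} = c i)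
        \<and> card {z\<in>V. E y z \<and> gdist V E x z = i} = a i
        \<and> card {z\<in>V. E y z \<and> gdist V E x z = i + 1} = b i"
    using dr unfolding distance_regular_def by blast+
  have fin: "finite V" and ne: "V \<noteq> {}" and EV: "\<And>x y. E x y \<Longrightarrow> x \<in> V \<and> y \<in> V"
    and sym: "\<And>x y. E x y \<Longrightarrow> E y x" and irr: "\<And>x. \<not> E x x"
    using sg unfolding simple_graph_def by blast+
  have exD: "\<exists>x\<in>V. \<exists>y\<in>V. gdist V E x y = D"
  proof -
    have eq: "{gdist V E x y | x y. x \<in> V \<and> y \<in> V} = (\<lambda>(x,y). gdist V E x y) ` (V \<times> V)" by auto
    have "finite {gdist V E x y | x y. x \<in> V \<and> y \<in> V}" unfolding eq using fin by simp
    moreover have "{gdist V E x y | x y. x \<in> V \<and> y \<in> V} \<noteq> {}" using ne by blast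
    ultimately have "D \<in> {gdist V E x y | x y. x \<in> V \<and> y \<in> V}" unfolding Dm by (rule Max_in)
    then show ?thesis by blast
  qed
  have exi: "\<exists>x\<in>V. \<exists>y\<in>V. gdist V E x y = i" if "i \<le> D" for i
    using exD dist_exists[OF sg cg] that by blast
  show a0: "a 0 = 0"
  proof -
    obtain x where x: "x \<in> V" using ne by blast
    have "gdist V E x x = 0" using gdist0[OF cg x x] by simp
    then have "card {z\<in>V. E x z \<and> gdist V E x z = 0} = a 0" using reg[of 0 x x] x by simp
    moreover have "{z\<in>V. E x z \<and> gdist V E x z = 0} = {}" using gdist0[OF cg x] irr by auto
    ultimately show ?thesis by simp
  qed
  have deg: "card {z\<in>V. E y z} = b 0" if y: "y \<in> V" for y
  proof -
    have "gdist V E y y = 0" using gdist0[OF cg y y] by simp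
    then have "card {z\<in>V. E y z \<and> gdist V E y z = 0 + 1} = b 0" using reg[of 0 y y] y by simp
    moreover have "{z\<in>V. E y z \<and> gdist V E y z = 0 + 1} = {z\<in>V. E y z}"
    proof -
      have "gdist V E y z = 1" if "z \<in> V" "E y z" for z
      proof -
        have "gdist V E y z \<le> Suc (gdist V E y y)" using gdist_tri[OF sg cg y that(2)] .
        moreover have "gdist V E y z \<noteq> 0" using gdist0[OF cg y that(1)] irr that(2) by auto
        ultimately show ?thesis using \<open>gdist V E y y = 0\<close> by simp
      qed
      then show ?thesis by auto
    qed
    ultimately show ?thesis by simp
  qed
  show "c i + a i + b i = b 0" if i: "i \<le> D" for i
  proof (cases "i = 0")
    case True
    then show ?thesis using c0 a0 by simp
  next
    case False
    obtain x y where xy: "x \<in> V" "y \<in> V" "gdist V E x y = i" using exi[OF i] by blast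
    define A where "A = {z\<in>V. E y z \<and> gdist V E x z = i - 1}"
    define B where "B = {z\<in>V. E y z \<and> gdist V E x z = i}"
    define C where "C = {z\<in>V. E y z \<and> gdist V E x z = i + 1}"
    have cards: "card A = c i" "card B = a i" "card C = b i"
      using reg[OF i xy] False unfolding A_def B_def C_def by auto
    have un: "{z\<in>V. E y z} = A \<union> B \<union> C"
    proof -
      have "gdist V E x z \<in> {i - 1, i, i + 1}" if "z \<in> V" "E y z" for z
      proof -
        have "gdist V E x z \<le> Suc i" using gdist_tri[OF sg cg xy(1) that(2)] xy(3) by simp
        moreover have "i \<le> Suc (gdist V E x z)" using gdist_tri[OF sg cg xy(1) sym[OF that(2)]] xy(3) by simp
        ultimately show ?thesis by auto
      qed
      then show ?thesis unfolding A_def B_def C_def by auto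
    qed
    have fA: "finite A" "finite B" "finite C" using fin unfolding A_def B_def C_def by auto
    have "card (A \<union> B \<union> C) = card A + card B + card C"
    proof -
      have d1: "A \<inter> B = {}" "(A \<union> B) \<inter> C = {}" using False unfolding A_def B_def C_def by auto
      have "card (A \<union> B \<union> C) = card (A \<union> B) + card C" using fA d1 card_Un_disjoint by (metis finite_UnI)
      also have "card (A \<union> B) = card A + card B" using fA d1 card_Un_disjoint by metis
      finally show ?thesis .
    qed
    then show ?thesis using deg[OF xy(2)] un cards by simp
  qed
  show "c i > 0" if i: "1 \<le> i" "i \<le> D" for i
  proof -
    obtain x y where xy: "x \<in> V" "y \<in> V" "gdist V E x y = i" using exi[OF i(2)] by blast
    obtain z where z: "z \<in> V" "E z y" "gdist V E x z = i - 1"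
      using gdist_pred[OF sg cg xy(1,2), of "i - 1"] xy(3) i by auto
    have "z \<in> {w\<in>V. E y w \<and> gdist V E x w = i - 1}" using z sym by auto
    moreover have "finite {w\<in>V. E y w \<and> gdist V E x w = i - 1}" using fin by auto
    ultimately have "card {w\<in>V. E y w \<and> gdist V E x w = i - 1} > 0" using card_gt_0_iff by blast
    then show ?thesis using reg[OF i(2) xy] i by simp
  qed
  show "b i > 0" if i: "i < D" for i
  proof -
    obtain x w where xw: "x \<in> V" "w \<in> V" "gdist V E x w = Suc i" using exi[of "Suc i"] i by auto
    obtain y where y: "y \<in> V" "E y w" "gdist V E x y = i"
      using gdist_pred[OF sg cg xw] by auto
    have "w \<in> {z\<in>V. E y z \<and> gdist V E x z = i + 1}" using y xw by auto
    moreover have "finite {z\<in>V. E y z \<and> gdist V E x z = i + 1}" using fin by auto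
    ultimately have "card {z\<in>V. E y z \<and> gdist V E x z = i + 1} > 0" using card_gt_0_iff by blast
    then show ?thesis using reg[of i x y] i xw(1) y by simp
  qed
qed


lemma alg:
  fixes D :: nat and a b c :: "nat \<Rightarrow> nat" and \<sigma> \<rho> :: "nat \<Rightarrow> real" and \<theta> \<theta>' :: real
  assumes D3: "D \<ge> 3" and c0: "c 0 = 0" and a0: "a 0 = 0"
    and kk: "\<And>i. i \<le> D \<Longrightarrow> c i + a i + b i = b 0"
    and cpos: "\<And>i. 1 \<le> i \<Longrightarrow> i \<le> D \<Longrightarrow> c i > 0"
    and bpos: "\<And>i. i < D \<Longrightarrow> b i > 0"
    and nb: "\<exists>i\<le>D. a i \<noteq> 0" and nab: "\<not> (a D \<noteq> 0 \<and> (\<forall>i<D. a i = 0))"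
    and ps: "pseudo_cosine D a b c \<theta> \<sigma>" and pr: "pseudo_cosine D a b c \<theta>' \<rho>"
    and s1: "\<sigma> 1 \<noteq> 1" and aux: "auxiliary_parameter D \<sigma> \<rho> 1"
  shows "((\<forall>i\<le>D - 1. \<rho> i = (-1) ^ i) \<and> \<rho> D \<noteq> (-1) ^ D)
    \<and> \<sigma> (D - 1) = \<sigma> D
    \<and> ((\<forall>i\<le>D - 2. a i = 0) \<and> a (D - 1) \<noteq> 0)"
proof -
  have sr: "\<And>i. i<D \<Longrightarrow> real (c i) * \<sigma> (i-1) + real (a i) * \<sigma> i + real (b i) * \<sigma> (Suc i) = \<theta> * \<sigma> i"
    and s0: "\<sigma> 0 = 1" using ps unfolding pseudo_cosine_def by auto
  have rr: "\<And>i. i<D \<Longrightarrow> real (c i) * \<rho> (i-1) + real (a i) * \<rho> i + real (b i) * \<rho> (Suc i) = \<theta>' * \<rho> i"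
    and r0: "\<rho> 0 = 1" using pr unfolding pseudo_cosine_def by auto
  have ax: "(\<sigma> i - \<sigma> (i-1)) * (\<rho> i + \<rho> (i-1)) = 0" if "1 \<le> i" "i \<le> D" for i
  proof -
    have "\<sigma> i * \<rho> i - \<sigma> (i - 1) * \<rho> (i - 1) = 1 * (\<sigma> (i - 1) * \<rho> i - \<sigma> i * \<rho> (i - 1))"
      using aux that unfolding auxiliary_parameter_def by auto
    then show ?thesis by (simp add: algebra_simps)
  qed
  have kr: "real (c i) + real (a i) + real (b i) = real (b 0)" if "i \<le> D" for i
    proof -
    have "real (c i + a i + b i) = real (b 0)" using kk[OF that] by simp
    then show ?thesis by simp
  qed
  have th: "\<theta> = real (b 0) * \<sigma> 1" using sr[of 0] D3 c0 a0 s0 by simp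
  have th': "\<theta>' = real (b 0) * \<rho> 1" using rr[of 0] D3 c0 a0 r0 by simp
  have r1: "\<rho> 1 = -1" using ax[of 1] D3 s0 r0 s1 by simp
  have b0p: "real (b 0) > 0" using bpos[of 0] D3 by simp
  have th'2: "\<theta>' = - real (b 0)" using th' r1 by simp
  have F: "real (b j) * \<rho> (Suc j) = - (real (b j) + 2 * real (a j)) * \<rho> j"
    if "j < D" "j = 0 \<or> \<rho> (j-1) = - \<rho> j" for j
  proof (cases "j = 0")
    case True then show ?thesis using r1 r0 a0 by simp
  next
    case False
    then have e: "\<rho> (j-1) = - \<rho> j" using that by simp
    have "(real (c j) + real (a j) + real (b j)) * \<rho> j = real (b 0) * \<rho> j" using kr that by simp
    moreover have "real (c j) * \<rho> (j-1) + real (a j) * \<rho> j + real (b j) * \<rho> (Suc j) = - real (b 0) * \<rho> j"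
      using rr[OF that(1)] th'2 by simp
    ultimately show ?thesis using e by (simp add: algebra_simps)
  qed
  define m where "m = (LEAST i. a i \<noteq> 0)"
  have am: "a m \<noteq> 0" unfolding m_def using nb by (metis (mono_tags, lifting) LeastI_ex)
  have mle: "m \<le> D" unfolding m_def using nb by (meson Least_le order_trans)
  have below: "a j = 0" if "j < m" for j using that unfolding m_def using not_less_Least by blast
  have m1: "m \<ge> 1" using am a0 by (cases m) auto
  have mD: "m < D" using nab below am mle by (metis le_neq_implies_less)
  have rho': "\<forall>i\<le>j. \<rho> i = (-1)^i" if "j \<le> m" for j
    using that
  proof (induction j)
    case 0 then show ?case using r0 by simp
  next
    case (Suc j)
    then have IH: "\<forall>i\<le>j. \<rho> i = (-1)^i" by simp
    have jl: "j < D" "j < m" using Suc.prems mD by auto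
    have cond: "j = 0 \<or> \<rho> (j-1) = - \<rho> j"
    proof (cases j)
      case (Suc j') then show ?thesis using IH by simp
    qed simp
    have "real (b j) * \<rho> (Suc j) = - real (b j) * \<rho> j" using F[OF jl(1) cond] below[OF jl(2)] by simp
    then have "real (b j) * (\<rho> (Suc j) + \<rho> j) = 0" by (simp add: algebra_simps)
    then have "\<rho> (Suc j) = - \<rho> j" using bpos[OF jl(1)] by (simp add: eq_neg_iff_add_eq_0)
    then show ?case using IH by (simp add: le_Suc_eq) 
  qed
  have rho: "\<rho> j = (-1)^j" if "j \<le> m" for j using rho'[OF that] by simp
  have rmne: "\<rho> m \<noteq> 0" using rho[of m] by simp
  have Fm: "real (b m) * \<rho> (Suc m) = - (real (b m) + 2 * real (a m)) * \<rho> m"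
  proof -
    have "\<rho> (m-1) = - \<rho> m" using rho[of m] rho[of "m-1"] m1
      by (cases m) auto
    then show ?thesis using F[OF mD] by simp
  qed
  have sne: "\<rho> (Suc m) + \<rho> m \<noteq> 0"
  proof
    assume h: "\<rho> (Suc m) + \<rho> m = 0"
    then have "\<rho> (Suc m) = - \<rho> m" by (simp add: eq_neg_iff_add_eq_0)
    then have "real (b m) * \<rho> (Suc m) = - real (b m) * \<rho> m" by simp
    with Fm have "2 * real (a m) * \<rho> m = 0" by (simp add: algebra_simps)
    then show False using am rmne by simp
  qed
  have seq: "\<sigma> (Suc m) = \<sigma> m" using ax[of "Suc m"] mD sne by simp
  have mD1: "m = D - 1"
  proof (rule ccontr)
    assume "m \<noteq> D - 1"
    then have iD: "Suc m < D" using mD by simp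
    define i where "i = Suc m"
    have iD': "i < D" "Suc i \<le> D" "1 \<le> i" "i - 1 = m" using iD i_def by auto
    have "(\<sigma> (Suc i) - \<sigma> i) * (\<rho> (Suc i) + \<rho> i) = 0" using ax[of "Suc i"] iD' by simp
    then consider "\<sigma> (Suc i) = \<sigma> i" | "\<rho> (Suc i) = - \<rho> i" by (auto simp: eq_neg_iff_add_eq_0)
    then show False
    proof cases
      case 1
      have e: "real (c i) * \<sigma> m + real (a i) * \<sigma> m + real (b i) * \<sigma> m = \<theta> * \<sigma> m"
      proof -
        have q1: "\<sigma> i = \<sigma> m" using seq i_def by simp
        have q2: "\<sigma> (Suc i) = \<sigma> m" using 1 q1 by simp
        show ?thesis using sr[OF iD'(1)] unfolding q1 q2 iD'(4) .
      qed
      have "(real (c i) + real (a i) + real (b i)) * \<sigma> m = real (b 0) * \<sigma> m" using kr iD' by simp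
      with e th have "real (b 0) * \<sigma> m = real (b 0) * \<sigma> 1 * \<sigma> m" by (simp add: algebra_simps)
      then have sm0: "\<sigma> m = 0" using b0p s1 by simp
      have down: "\<sigma> (m - t) = 0 \<and> \<sigma> (Suc m - t) = 0" if "t \<le> m" for t
        using that
      proof (induction t)
        case 0 then show ?case using sm0 seq by simp
      next
        case (Suc t)
        define j where "j = m - t"
        have j: "1 \<le> j" "j < D" "Suc j = Suc m - t" "m - Suc t = j - 1" using Suc.prems mD j_def by auto
        have IH: "\<sigma> (m - t) = 0 \<and> \<sigma> (Suc m - t) = 0" using Suc.IH Suc.prems by simp
        have z: "\<sigma> j = 0" "\<sigma> (Suc j) = 0" proof -
          have "Suc m - t = Suc (m - t)" using Suc.prems by simp
          then show "\<sigma> j = 0" "\<sigma> (Suc j) = 0" using IH unfolding j_def by simp_all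
        qed
        have "real (c j) * \<sigma> (j-1) = 0" using sr[OF j(2)] z by simp
        then have "\<sigma> (j-1) = 0" using cpos[OF j(1)] j(2) by simp
        moreover have "Suc m - Suc t = j" using j_def by simp
        ultimately show ?case using z(1) j(4) by simp
      qed
      show False using down[of m] s0 by simp
    next
      case 2
      have e: "real (c i) * \<rho> m + real (a i) * \<rho> i - real (b i) * \<rho> i = - real (b 0) * \<rho> i"
        using rr[OF iD'(1)] 2 iD' th'2 by simp
      have "(real (c i) + real (a i) + real (b i)) * \<rho> i = real (b 0) * \<rho> i" using kr iD' by simp
      with e have e2: "real (c i) * \<rho> m = - (real (c i) + 2 * real (a i)) * \<rho> i" by (simp add: algebra_simps)
      have Fm': "real (b m) * \<rho> i = - (real (b m) + 2 * real (a m)) * \<rho> m" using Fm i_def by simp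
      have "real (c i) * real (b m) * \<rho> m = (real (c i) + 2 * real (a i)) * (real (b m) + 2 * real (a m)) * \<rho> m"
      proof -
        have "real (c i) * real (b m) * \<rho> m = real (b m) * (real (c i) * \<rho> m)" by simp
        also have "\<dots> = - (real (c i) + 2 * real (a i)) * (real (b m) * \<rho> i)" using e2 by simp
        also have "\<dots> = - (real (c i) + 2 * real (a i)) * (- (real (b m) + 2 * real (a m)) * \<rho> m)" using Fm' by simp
        also have "\<dots> = (real (c i) + 2 * real (a i)) * (real (b m) + 2 * real (a m)) * \<rho> m" by (simp add: algebra_simps)
        finally show ?thesis .
      qed
      then have "real (c i) * real (b m) = (real (c i) + 2 * real (a i)) * (real (b m) + 2 * real (a m))"
        using rmne by simp
      then have "real (c i * b m) = real ((c i + 2 * a i) * (b m + 2 * a m))" by simp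
      then have "c i * b m = (c i + 2 * a i) * (b m + 2 * a m)" by (simp only: of_nat_eq_iff)
      moreover have "c i > 0" using cpos iD' by simp
      moreover have "c i * b m < c i * (b m + 2 * a m)" using \<open>c i > 0\<close> am by simp
      moreover have "c i * (b m + 2 * a m) \<le> (c i + 2 * a i) * (b m + 2 * a m)" by (rule mult_le_mono1) simp
      ultimately show False by linarith
    qed
  qed
  show ?thesis
  proof (intro conjI allI impI)
    fix i assume "i \<le> D - 1" then show "\<rho> i = (-1)^i" using rho mD1 by simp
  next
    have "\<rho> D = - \<rho> (D - 1) \<Longrightarrow> False" proof -
      assume h: "\<rho> D = - \<rho> (D - 1)"
      have "Suc (D-1) = D" using mD by simp
      then have "\<rho> (Suc m) + \<rho> m = 0" using h mD1 by simp
      then show False using sne by simp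
    qed
    moreover have "\<rho> (D-1) = (-1)^(D-1)" using rho mD1 by simp
    moreover have "(-1::real)^D = - ((-1::real)^(D-1))" proof -
      obtain k where "D = Suc k" using D3 by (cases D) auto
      then show ?thesis by simp
    qed
    ultimately show "\<rho> D \<noteq> (-1)^D" by auto
  next
    show "\<sigma> (D - 1) = \<sigma> D" using seq mD1 mD by simp
  next
    fix i assume "i \<le> D - 2" then show "a i = 0" using below mD1 D3 by simp
  next
    show "a (D - 1) \<noteq> 0" using am mD1 by simp
  qed
qed


theorem lemma8p2:
  fixes V :: "'v set" and E :: "'v \<Rightarrow> 'v \<Rightarrow> bool" and D :: nat
    and a b c :: "nat \<Rightarrow> nat" and \<sigma> \<rho> :: "nat \<Rightarrow> real"
  assumes "distance_regular V E D a b c"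
    and "D \<ge> 3"
    and "\<not> bipartite_drg D a" and "\<not> almost_bipartite_drg D a"
    and "tight_pair D a b c \<sigma> \<rho>"
    and "nontrivial_pc \<sigma>" and "nontrivial_pc \<rho>"
    and "auxiliary_parameter D \<sigma> \<rho> 1"
  shows "((\<forall>i\<le>D - 1. \<rho> i = (-1) ^ i) \<and> \<rho> D \<noteq> (-1) ^ D)
    \<and> \<sigma> (D - 1) = \<sigma> D
    \<and> ((\<forall>i\<le>D - 2. a i = 0) \<and> a (D - 1) \<noteq> 0)"
proof -
  have c0: "c 0 = 0" using assms(1) unfolding distance_regular_def by blast
  obtain \<theta> where ps: "pseudo_cosine D a b c \<theta> \<sigma>"
    using assms(5) unfolding tight_pair_def is_pseudo_cosine_def by blast
  obtain \<theta>' where pr: "pseudo_cosine D a b c \<theta>' \<rho>"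
    using assms(5) unfolding tight_pair_def is_pseudo_cosine_def by blast
  have nb: "\<exists>i\<le>D. a i \<noteq> 0" using assms(3) unfolding bipartite_drg_def by blast
  have nab: "\<not> (a D \<noteq> 0 \<and> (\<forall>i<D. a i = 0))" using assms(4) unfolding almost_bipartite_drg_def by blast
  have s1: "\<sigma> 1 \<noteq> 1" using assms(6) unfolding nontrivial_pc_def .
  show ?thesis
    by (rule alg[OF assms(2) c0 graph_facts(1)[OF assms(1)] graph_facts(2)[OF assms(1)]
        graph_facts(3)[OF assms(1)] graph_facts(4)[OF assms(1)] nb nab ps pr s1 assms(8)])
qed

end
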